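(* Let $F$ be a field, $n\in\mathbb N\cup\{\infty\}$, and let $\varphi$ be an almost identity PC-map of $\mathrm{UT}(n,F)$. Then $\varphi$ is a subcentral map: for every $a\in\mathrm{UT}(n,F)$, $\varphi(a)\in aC_2$. Concretely, if $n=\infty$ then $\varphi(a)=a$ for all $a$, and if $n$ is finite then $\varphi(a)_{ij}=a_{ij}$ for all $(i,j)\notin\{(1,n-1),(1,n),(2,n)\}$.
   Context: $\mathrm{UT}(n,F)$ is the group of upper unitriangular $n\times n$ matrices over $F$ (for $n=\infty$: all $\mathbb N\times\mathbb N$ matrices with $1$ on the diagonal and $0$ below it). $e$ is the identity, $e_{ij}$ the matrix unit, $t_{ij}(\alpha)=e+\alpha e_{ij}$ ($i<j$). $[x,y]=xyx^{-1}y^{-1}$. A PC-map is a bijection $\varphi$ of the group with $\varphi([x,y])=[\varphi(x),\varphi(y)]$ for all $x,y$; it is almost identity if $\varphi(t_{ij}(\alpha))=t_{ij}(\alpha)$ for all $i<j$, $\alpha\in F$. $C_2$ is the second center of $\mathrm{UT}(n,F)$ (the preimage of the center of $\mathrm{UT}(n,F)/C$, where $C$ is the center); it is trivial for $n=\infty$ and equals $\{t_{1\,n-1}(\alpha)t_{1n}(\beta)t_{2n}(\gamma):\alpha,\beta,\gamma\in F\}$ for finite $n\ge3$. A map $\psi$ is subcentral if $\psi(a)=af(a)$ for some function $f:\mathrm{UT}(n,F)\to C_2$. *)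

theory Defs
  imports "HOL-Algebra.Group" "HOL-Library.Extended_Nat"
begin

text \<open>Matrices indexed by positive naturals 1,2,...; n :: enat, with n = \<infinity> meaning
  all N x N matrices. Entries outside the index range are 0 by convention.\<close>

type_synonym 'a mat = "nat \<Rightarrow> nat \<Rightarrow> 'a"

definition idx :: "enat \<Rightarrow> nat set" where
  "idx n = {i. 1 \<le> i \<and> enat i \<le> n}"

definition UT_carrier :: "enat \<Rightarrow> ('a::field) mat set" where
  "UT_carrier n = {A. (\<forall>i j. (i \<notin> idx n \<or> j \<notin> idx n) \<longrightarrow> A i j = 0)
                    \<and> (\<forall>i\<in>idx n. A i i = 1)
                    \<and> (\<forall>i j. j < i \<longrightarrow> A i j = 0)}"

definition ut_one :: "enat \<Rightarrow> ('a::field) mat" where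
  "ut_one n = (\<lambda>i j. if i \<in> idx n \<and> i = j then 1 else 0)"

text \<open>Product of upper triangular matrices: the sum over k runs only over i..j, so it is
  finite also for n = \<infinity>.\<close>
definition ut_mult :: "enat \<Rightarrow> ('a::field) mat \<Rightarrow> 'a mat \<Rightarrow> 'a mat" where
  "ut_mult n A B = (\<lambda>i j. if i \<in> idx n \<and> j \<in> idx n then (\<Sum>k\<in>{i..j}. A i k * B k j) else 0)"

definition UT :: "enat \<Rightarrow> ('a::field) mat monoid" where
  "UT n = \<lparr>carrier = UT_carrier n, mult = ut_mult n, one = ut_one n\<rparr>"

definition ut_comm :: "enat \<Rightarrow> ('a::field) mat \<Rightarrow> 'a mat \<Rightarrow> 'a mat" where
  "ut_comm n x y = x \<otimes>\<^bsub>UT n\<^esub> y \<otimes>\<^bsub>UT n\<^esub> inv\<^bsub>UT n\<^esub> x \<otimes>\<^bsub>UT n\<^esub> inv\<^bsub>UT n\<^esub> y"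

definition transv :: "enat \<Rightarrow> nat \<Rightarrow> nat \<Rightarrow> 'a::field \<Rightarrow> 'a mat" where
  "transv n i j \<alpha> = (\<lambda>k l. ut_one n k l + (if k = i \<and> l = j then \<alpha> else 0))"

definition PC_map :: "enat \<Rightarrow> (('a::field) mat \<Rightarrow> 'a mat) \<Rightarrow> bool" where
  "PC_map n \<phi> \<longleftrightarrow> bij_betw \<phi> (UT_carrier n) (UT_carrier n)
     \<and> (\<forall>x\<in>UT_carrier n. \<forall>y\<in>UT_carrier n. \<phi> (ut_comm n x y) = ut_comm n (\<phi> x) (\<phi> y))"

definition almost_identity :: "enat \<Rightarrow> (('a::field) mat \<Rightarrow> 'a mat) \<Rightarrow> bool" where
  "almost_identity n \<phi> \<longleftrightarrow>
     (\<forall>i\<in>idx n. \<forall>j\<in>idx n. \<forall>\<alpha>. i < j \<longrightarrow> \<phi> (transv n i j \<alpha>) = transv n i j \<alpha>)"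

definition ut_center :: "enat \<Rightarrow> ('a::field) mat set" where
  "ut_center n = {z \<in> UT_carrier n. \<forall>x\<in>UT_carrier n. ut_mult n z x = ut_mult n x z}"

definition ut_center2 :: "enat \<Rightarrow> ('a::field) mat set" where
  "ut_center2 n = {z \<in> UT_carrier n. \<forall>x\<in>UT_carrier n. ut_comm n z x \<in> ut_center n}"

definition subcentral :: "enat \<Rightarrow> (('a::field) mat \<Rightarrow> 'a mat) \<Rightarrow> bool" where
  "subcentral n \<psi> \<longleftrightarrow> (\<exists>f. (\<forall>a\<in>UT_carrier n. f a \<in> ut_center2 n \<and> \<psi> a = ut_mult n a (f a)))"

end

theory Submission
  imports Defs
begin

lemma idx_le: "j \<in> idx n \<Longrightarrow> 1 \<le> i \<Longrightarrow> i \<le> j \<Longrightarrow> i \<in> idx n"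
  unfolding idx_def by (auto intro: order_trans[of "enat i" "enat j" n])

lemma carr_out: "A \<in> UT_carrier n \<Longrightarrow> i \<notin> idx n \<or> j \<notin> idx n \<Longrightarrow> A i j = 0"
  unfolding UT_carrier_def by blast
lemma carr_diag: "A \<in> UT_carrier n \<Longrightarrow> i \<in> idx n \<Longrightarrow> A i i = 1"
  unfolding UT_carrier_def by blast
lemma carr_below: "A \<in> UT_carrier n \<Longrightarrow> j < i \<Longrightarrow> A i j = 0"
  unfolding UT_carrier_def by blast
lemma carr_le: "A \<in> UT_carrier n \<Longrightarrow> j \<le> i \<Longrightarrow> A i j = ut_one n i j"
  unfolding ut_one_def
  by (metis carr_below carr_diag carr_out le_neq_implies_less)

lemma one_idx: "i \<in> idx n \<Longrightarrow> ut_one n i j = (if i = j then 1 else 0)"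
  by (simp add: ut_one_def)

lemma one_idx2: "j \<in> idx n \<Longrightarrow> ut_one n i j = (if i = j then 1 else 0)"
  by (auto simp add: ut_one_def)

lemma mult_eq:
  assumes "A \<in> UT_carrier n" "B \<in> UT_carrier n"
  shows "ut_mult n A B i j = (\<Sum>k\<in>{i..j}. A i k * B k j)"
proof (cases "i \<in> idx n \<and> j \<in> idx n")
  case True thus ?thesis by (simp add: ut_mult_def)
next
  case False
  have "(\<Sum>k\<in>{i..j}. A i k * B k j) = 0"
    by (rule sum.neutral) (use False carr_out[OF assms(1)] carr_out[OF assms(2)] in auto)
  thus ?thesis using False by (simp add: ut_mult_def)
qed

lemma mult_closed:
  assumes "A \<in> UT_carrier n" "B \<in> UT_carrier n"
  shows "ut_mult n A B \<in> UT_carrier n"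
  unfolding UT_carrier_def
proof (intro CollectI conjI allI impI ballI)
  fix i j assume "i \<notin> idx n \<or> j \<notin> idx n"
  thus "ut_mult n A B i j = 0" by (auto simp: ut_mult_def)
next
  fix i assume "i \<in> idx n"
  thus "ut_mult n A B i i = 1" using carr_diag[OF assms(1)] carr_diag[OF assms(2)]
    by (simp add: ut_mult_def)
next
  fix i j :: nat assume "j < i"
  thus "ut_mult n A B i j = 0" by (simp add: mult_eq[OF assms])
qed

lemma mult_assoc:
  assumes A: "A \<in> UT_carrier n" and B: "B \<in> UT_carrier n" and C: "C \<in> UT_carrier n"
  shows "ut_mult n (ut_mult n A B) C = ut_mult n A (ut_mult n B C)"
proof (intro ext)
  fix i j
  have "ut_mult n (ut_mult n A B) C i j = (\<Sum>k\<in>{i..j}. (\<Sum>h\<in>{i..k}. A i h * B h k) * C k j)"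
    by (simp add: mult_eq mult_closed A B C)
  also have "\<dots> = (\<Sum>k\<in>{i..j}. \<Sum>h\<in>{i..j}. A i h * B h k * C k j)"
  proof (rule sum.cong[OF refl])
    fix k assume k: "k \<in> {i..j}"
    have "(\<Sum>h\<in>{i..k}. A i h * B h k) * C k j = (\<Sum>h\<in>{i..k}. A i h * B h k * C k j)"
      by (simp add: sum_distrib_right)
    also have "\<dots> = (\<Sum>h\<in>{i..j}. A i h * B h k * C k j)"
      by (rule sum.mono_neutral_left) (use k carr_below[OF B] in auto)
    finally show "(\<Sum>h\<in>{i..k}. A i h * B h k) * C k j = (\<Sum>h\<in>{i..j}. A i h * B h k * C k j)" .
  qed
  also have "\<dots> = (\<Sum>h\<in>{i..j}. \<Sum>k\<in>{i..j}. A i h * B h k * C k j)"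
    by (rule sum.swap)
  also have "\<dots> = (\<Sum>h\<in>{i..j}. A i h * (\<Sum>k\<in>{h..j}. B h k * C k j))"
  proof (rule sum.cong[OF refl])
    fix h assume h: "h \<in> {i..j}"
    have "A i h * (\<Sum>k\<in>{h..j}. B h k * C k j) = (\<Sum>k\<in>{h..j}. A i h * B h k * C k j)"
      by (simp add: sum_distrib_left mult.assoc)
    also have "\<dots> = (\<Sum>k\<in>{i..j}. A i h * B h k * C k j)"
      by (rule sum.mono_neutral_left) (use h carr_below[OF B] in auto)
    finally show "(\<Sum>k\<in>{i..j}. A i h * B h k * C k j) = A i h * (\<Sum>k\<in>{h..j}. B h k * C k j)" by simp
  qed
  also have "\<dots> = ut_mult n A (ut_mult n B C) i j"
    by (simp add: mult_eq mult_closed A B C)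
  finally show "ut_mult n (ut_mult n A B) C i j = ut_mult n A (ut_mult n B C) i j" .
qed

lemma one_closed: "ut_one n \<in> UT_carrier n"
  unfolding UT_carrier_def ut_one_def by auto

lemma one_left:
  assumes A: "A \<in> UT_carrier n"
  shows "ut_mult n (ut_one n) A = A"
proof (intro ext)
  fix i j
  show "ut_mult n (ut_one n) A i j = A i j"
  proof (cases "i \<in> idx n")
    case True
    have "ut_mult n (ut_one n) A i j = (\<Sum>k\<in>{i..j}. (if i = k then A k j else 0))"
      using True by (intro trans[OF mult_eq[OF one_closed A]] sum.cong) (auto simp: ut_one_def)
    also have "\<dots> = A i j" using carr_below[OF A, of j i] by (auto simp: sum.delta)
    finally show ?thesis .
  next
    case False thus ?thesis by (simp add: ut_mult_def carr_out[OF A])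
  qed
qed

lemma one_right:
  assumes A: "A \<in> UT_carrier n"
  shows "ut_mult n A (ut_one n) = A"
proof (intro ext)
  fix i j
  show "ut_mult n A (ut_one n) i j = A i j"
  proof (cases "j \<in> idx n")
    case True
    have "ut_mult n A (ut_one n) i j = (\<Sum>k\<in>{i..j}. (if k = j then A i k else 0))"
      using True by (intro trans[OF mult_eq[OF A one_closed]] sum.cong) (auto simp: ut_one_def)
    also have "\<dots> = A i j" using carr_below[OF A, of j i] by (auto simp: sum.delta')
    finally show ?thesis .
  next
    case False thus ?thesis by (simp add: ut_mult_def carr_out[OF A])
  qed
qed

function linv :: "('a::field) mat \<Rightarrow> nat \<Rightarrow> nat \<Rightarrow> 'a" where
  "linv A i j = (if j < i then 0 else if j = i then 1 else - (\<Sum>k\<in>{i..<j}. linv A i k * A k j))"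
  by auto
termination by (relation "measure (\<lambda>(A,i,j). j)") auto

declare linv.simps[simp del]

definition linvm :: "enat \<Rightarrow> ('a::field) mat \<Rightarrow> 'a mat" where
  "linvm n A = (\<lambda>i j. if i \<in> idx n \<and> j \<in> idx n then linv A i j else 0)"

lemma linvm_closed: "linvm n A \<in> UT_carrier n"
  unfolding UT_carrier_def linvm_def by (auto simp: linv.simps)

lemma linvm_inv:
  assumes A: "A \<in> UT_carrier n"
  shows "ut_mult n (linvm n A) A = ut_one n"
proof (intro ext)
  fix i j
  show "ut_mult n (linvm n A) A i j = ut_one n i j"
  proof (cases "i \<in> idx n \<and> j \<in> idx n")
    case True
    hence eq: "ut_mult n (linvm n A) A i j = (\<Sum>k\<in>{i..j}. linv A i k * A k j)"
      unfolding mult_eq[OF linvm_closed A]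
      by (intro sum.cong refl) (auto simp: linvm_def idx_def intro: order_trans[of "enat _" "enat j" n])
    show ?thesis
    proof (cases "j < i")
      case True thus ?thesis using eq by (simp add: ut_one_def)
    next
      case False
      show ?thesis
      proof (cases "j = i")
        case True thus ?thesis using eq \<open>i \<in> idx n \<and> j \<in> idx n\<close> carr_diag[OF A]
          by (simp add: ut_one_def linv.simps)
      next
        case False
        with \<open>\<not> j < i\<close> have ij: "i < j" by simp
        have "{i..j} = insert j {i..<j}" using ij by auto
        hence "(\<Sum>k\<in>{i..j}. linv A i k * A k j) = linv A i j * A j j + (\<Sum>k\<in>{i..<j}. linv A i k * A k j)"
          by simp
        also have "\<dots> = 0" using ij carr_diag[OF A, of j] True
          by (subst linv.simps[of A i j]) simp
        finally show ?thesis using eq ij by (simp add: ut_one_def)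
      qed
    qed
  next
    case False thus ?thesis by (auto simp: ut_mult_def ut_one_def)
  qed
qed

lemma UT_simps [simp]: "carrier (UT n) = UT_carrier n" "mult (UT n) = ut_mult n" "one (UT n) = ut_one n"
  by (simp_all add: UT_def)

lemma UT_group: "group (UT n :: ('a::field) mat monoid)"
proof (rule groupI, goal_cases)
  case 1 thus ?case by (simp add: mult_closed)
next
  case 2 thus ?case by (simp add: one_closed)
next
  case 3 thus ?case by (simp add: mult_assoc)
next
  case 4 thus ?case by (simp add: one_left)
next
  case (5 x) thus ?case using linvm_closed linvm_inv by fastforce
qed

abbreviation Inv :: "enat \<Rightarrow> ('a::field) mat \<Rightarrow> 'a mat" where
  "Inv n x \<equiv> m_inv (UT n) x"

lemma Inv_closed: "x \<in> UT_carrier n \<Longrightarrow> Inv n x \<in> UT_carrier n"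
  using group.inv_closed[OF UT_group, of x n] by simp
lemma r_inv: "x \<in> UT_carrier n \<Longrightarrow> ut_mult n x (Inv n x) = ut_one n"
  using group.r_inv[OF UT_group, of x n] by simp
lemma l_inv: "x \<in> UT_carrier n \<Longrightarrow> ut_mult n (Inv n x) x = ut_one n"
  using group.l_inv[OF UT_group, of x n] by simp
lemma inv_eq:
  assumes "y \<in> UT_carrier n" "x \<in> UT_carrier n" "ut_mult n y x = ut_one n"
  shows "Inv n x = (y::('a::field) mat)"
proof -
  interpret G: group "UT n :: 'a mat monoid" by (rule UT_group)
  show ?thesis using assms G.inv_equality by simp
qed

lemma comm_unfold: "ut_comm n x y = ut_mult n (ut_mult n (ut_mult n x y) (Inv n x)) (Inv n y)"
  by (simp add: ut_comm_def)

lemma comm_closed: "x \<in> UT_carrier n \<Longrightarrow> y \<in> UT_carrier n \<Longrightarrow> ut_comm n x y \<in> UT_carrier n"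
  by (simp add: comm_unfold mult_closed Inv_closed)

lemma pert_right:
  assumes A: "A \<in> UT_carrier n" and B: "B \<in> UT_carrier n" and B': "B' \<in> UT_carrier n"
    and p: "p \<in> idx n"
    and eq: "\<And>k j. B' k j = B k j + (if k = p then w j else 0)"
    and w: "\<And>j. j < p \<Longrightarrow> w j = 0"
  shows "ut_mult n A B' i j = ut_mult n A B i j + A i p * w j"
proof -
  have "ut_mult n A B' i j = (\<Sum>k\<in>{i..j}. A i k * B k j + (if k = p then A i p * w j else 0))"
    unfolding mult_eq[OF A B'] by (intro sum.cong refl) (simp add: eq distrib_left)
  also have "\<dots> = ut_mult n A B i j + (if p \<in> {i..j} then A i p * w j else 0)"
    by (simp add: sum.distrib mult_eq[OF A B] sum.delta')
  also have "\<dots> = ut_mult n A B i j + A i p * w j"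
    using carr_below[OF A, of p i] w[of j] by auto
  finally show ?thesis .
qed

lemma pert_left:
  assumes A: "A \<in> UT_carrier n" and A': "A' \<in> UT_carrier n" and B: "B \<in> UT_carrier n"
    and q: "q \<in> idx n"
    and eq: "\<And>i k. A' i k = A i k + (if k = q then u i else 0)"
    and u: "\<And>i. q < i \<Longrightarrow> u i = 0"
  shows "ut_mult n A' B i j = ut_mult n A B i j + u i * B q j"
proof -
  have "ut_mult n A' B i j = (\<Sum>k\<in>{i..j}. A i k * B k j + (if k = q then u i * B q j else 0))"
    unfolding mult_eq[OF A' B] by (intro sum.cong refl) (simp add: eq distrib_right)
  also have "\<dots> = ut_mult n A B i j + (if q \<in> {i..j} then u i * B q j else 0)"
    by (simp add: sum.distrib mult_eq[OF A B] sum.delta')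
  also have "\<dots> = ut_mult n A B i j + u i * B q j"
    using carr_below[OF B, of j q] u[of i] by auto
  finally show ?thesis .
qed

lemma transv_closed:
  assumes "p < q" "q \<in> idx n" "1 \<le> p"
  shows "transv n p q \<alpha> \<in> UT_carrier n"
proof -
  have "p \<in> idx n" using assms idx_le by auto
  thus ?thesis using assms unfolding UT_carrier_def transv_def ut_one_def by auto
qed

lemma RT:
  assumes A: "A \<in> UT_carrier n" and pq: "p < q" "q \<in> idx n" "1 \<le> p"
  shows "ut_mult n A (transv n p q \<alpha>) i j = A i j + (if j = q then \<alpha> * A i p else 0)"
proof -
  have p: "p \<in> idx n" using pq idx_le by auto
  have "ut_mult n A (transv n p q \<alpha>) i j = ut_mult n A (ut_one n) i j + A i p * (if j = q then \<alpha> else 0)"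
    by (rule pert_right[OF A one_closed transv_closed[OF pq] p]) (use pq in \<open>auto simp: transv_def\<close>)
  thus ?thesis by (simp add: one_right[OF A])
qed

lemma LT:
  assumes A: "A \<in> UT_carrier n" and pq: "p < q" "q \<in> idx n" "1 \<le> p"
  shows "ut_mult n (transv n p q \<alpha>) A i j = A i j + (if i = p then \<alpha> * A q j else 0)"
proof -
  have "ut_mult n (transv n p q \<alpha>) A i j = ut_mult n (ut_one n) A i j + (if i = p then \<alpha> else 0) * A q j"
    by (rule pert_left[OF one_closed transv_closed[OF pq] A pq(2)]) (use pq in \<open>auto simp: transv_def\<close>)
  thus ?thesis by (simp add: one_left[OF A])
qed

lemma inv_transv:
  assumes pq: "p < q" "q \<in> idx n" "1 \<le> p"
  shows "Inv n (transv n p q \<alpha>) = transv n p q (-\<alpha>)"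
proof (rule inv_eq[OF transv_closed[OF pq] transv_closed[OF pq]])
  show "ut_mult n (transv n p q (- \<alpha>)) (transv n p q \<alpha>) = ut_one n"
  proof (intro ext)
    fix i j
    show "ut_mult n (transv n p q (- \<alpha>)) (transv n p q \<alpha>) i j = ut_one n i j"
      using pq by (simp add: LT[OF transv_closed[OF pq] pq]) (auto simp: transv_def ut_one_def)
  qed
qed

lemma CT:
  assumes Y: "Y \<in> UT_carrier n" and pq: "p < q" "q \<in> idx n" "1 \<le> p"
  shows "ut_comm n Y (transv n p q \<alpha>) i j
     = ut_one n i j + \<alpha> * (Y i p * Inv n Y q j - (if i = p \<and> j = q then 1 else 0))"
proof -
  have p: "p \<in> idx n" using pq idx_le by auto
  let ?t = "transv n p q \<alpha>" and ?Y' = "Inv n Y"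
  have t: "?t \<in> UT_carrier n" by (rule transv_closed[OF pq])
  have Y': "?Y' \<in> UT_carrier n" by (rule Inv_closed[OF Y])
  define W where "W = ut_mult n ?t ?Y'"
  have W: "W \<in> UT_carrier n" unfolding W_def by (simp add: mult_closed t Y')
  have Wij: "\<And>k j. W k j = ?Y' k j + (if k = p then \<alpha> * ?Y' q j else 0)"
    unfolding W_def by (rule LT[OF Y' pq])
  define Z where "Z = ut_mult n Y W"
  have Z: "Z \<in> UT_carrier n" unfolding Z_def by (simp add: mult_closed Y W)
  have Zij: "\<And>i j. Z i j = ut_one n i j + Y i p * (\<alpha> * ?Y' q j)"
  proof -
    fix i j
    have "Z i j = ut_mult n Y ?Y' i j + Y i p * (\<alpha> * ?Y' q j)"
      unfolding Z_def
      by (rule pert_right[OF Y Y' W p Wij]) (use carr_below[OF Y'] pq in auto)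
    thus "Z i j = ut_one n i j + Y i p * (\<alpha> * ?Y' q j)" by (simp add: r_inv[OF Y])
  qed
  have "ut_comm n Y ?t = ut_mult n Z (transv n p q (-\<alpha>))"
    unfolding comm_unfold Z_def W_def inv_transv[OF pq]
    by (simp add: mult_assoc Y t Y')
  hence "ut_comm n Y ?t i j = Z i j + (if j = q then - \<alpha> * Z i p else 0)"
    by (simp add: RT[OF Z pq])
  also have "\<dots> = ut_one n i j + \<alpha> * (Y i p * Inv n Y q j - (if i = p \<and> j = q then 1 else 0))"
    using carr_below[OF Y', of p q] pq p
    by (auto simp: Zij one_idx2 algebra_simps)
  finally show ?thesis .
qed

lemma RTI:
  assumes X: "X \<in> UT_carrier n" and s: "s \<in> idx n" and row: "\<And>j. X s j = ut_one n s j"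
  shows "Inv n X s j = ut_one n s j"
proof (cases "s \<le> j")
  case True
  have "ut_one n s j = ut_mult n X (Inv n X) s j" by (simp add: r_inv[OF X])
  also have "\<dots> = (\<Sum>k\<in>{s..j}. (if k = s then Inv n X k j else 0))"
    unfolding mult_eq[OF X Inv_closed[OF X]] by (intro sum.cong refl) (auto simp: row one_idx[OF s])
  also have "\<dots> = Inv n X s j" using True by (simp add: sum.delta')
  finally show ?thesis by simp
next
  case False thus ?thesis using carr_below[OF Inv_closed[OF X], of j s] by (simp add: ut_one_def)
qed

definition colm :: "enat \<Rightarrow> nat \<Rightarrow> (nat \<Rightarrow> 'a::field) \<Rightarrow> 'a mat" where
  "colm n s c = (\<lambda>i j. ut_one n i j + (if j = s then c i else 0))"

lemma colm_inj: "colm n s c = colm n s c' \<Longrightarrow> c i = c' i"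
  unfolding colm_def by (drule fun_cong[of _ _ i], drule fun_cong[of _ _ s]) simp

lemma colm_closed:
  assumes s: "s \<in> idx n" and c: "\<And>i. c i \<noteq> 0 \<Longrightarrow> 1 \<le> i \<and> i < s"
  shows "colm n s c \<in> UT_carrier n"
  unfolding UT_carrier_def colm_def ut_one_def
proof (intro CollectI conjI allI impI ballI)
  fix i j assume "i \<notin> idx n \<or> j \<notin> idx n"
  moreover have "c i = 0 \<or> i \<in> idx n" using c[of i] idx_le[OF s, of i] by fastforce
  ultimately show "(if i \<in> idx n \<and> i = j then 1 else 0) + (if j = s then c i else 0) = 0"
    using s by auto
next
  fix i assume "i \<in> idx n"
  thus "(if i \<in> idx n \<and> i = i then 1 else (0::'a)) + (if i = s then c i else 0) = 1"
    using c[of i] by auto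
next
  fix i j :: nat assume "j < i"
  thus "(if i \<in> idx n \<and> i = j then 1 else 0) + (if j = s then c i else 0) = 0"
    using c[of i] by (cases "c i = 0") auto
qed

lemma transv_colm: "transv n 1 s x = colm n s (\<lambda>i. if i = 1 then x else 0)"
  unfolding transv_def colm_def by auto

lemma detector:
  assumes Y: "Y \<in> UT_carrier n" and kl: "k < l" "l \<le> r" "r < s" "s \<in> idx n" "1 \<le> k"
  shows "ut_comm n (ut_comm n Y (transv n k l 1)) (transv n r s lam)
       = colm n s (\<lambda>i. lam * (Y i k * Inv n Y l r - (if i = k \<and> l = r then 1 else 0)))"
proof -
  have lidx: "l \<in> idx n" and ridx: "r \<in> idx n" using kl idx_le by auto
  have t1: "transv n k l 1 \<in> UT_carrier n" by (rule transv_closed) (use kl lidx in auto)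
  define X where "X = ut_comm n Y (transv n k l 1)"
  have X: "X \<in> UT_carrier n" unfolding X_def by (rule comm_closed[OF Y t1])
  have Xij: "\<And>i j. X i j = ut_one n i j + (Y i k * Inv n Y l j - (if i = k \<and> j = l then 1 else 0))"
    unfolding X_def by (subst CT[OF Y]) (use kl lidx in auto)
  have rowX: "\<And>j. X s j = ut_one n s j"
    using carr_below[OF Y, of k s] kl by (simp add: Xij)
  have rowX': "\<And>j. Inv n X s j = ut_one n s j" by (rule RTI[OF X kl(4) rowX])
  show ?thesis
  proof (intro ext)
    fix i j
    have "ut_comm n X (transv n r s lam) i j
        = ut_one n i j + lam * (X i r * Inv n X s j - (if i = r \<and> j = s then 1 else 0))"
      by (rule CT[OF X]) (use kl in auto)
    also have "\<dots> = colm n s (\<lambda>i. lam * (Y i k * Inv n Y l r - (if i = k \<and> l = r then 1 else 0))) i j"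
      using kl ridx by (auto simp: rowX' Xij one_idx2 one_idx[OF kl(4)] colm_def algebra_simps)
    finally show "ut_comm n (ut_comm n Y (transv n k l 1)) (transv n r s lam) i j = colm n s (\<lambda>i. lam * (Y i k * Inv n Y l r - (if i = k \<and> l = r then 1 else 0))) i j"
      unfolding X_def .
  qed
qed

lemma comm_self: "x \<in> UT_carrier n \<Longrightarrow> ut_comm n x x = (ut_one n :: ('a::field) mat)"
proof -
  assume x: "x \<in> UT_carrier n"
  show ?thesis using x unfolding comm_unfold
    by (simp add: mult_assoc mult_closed Inv_closed r_inv one_right)
qed

lemma col1: "Y \<in> UT_carrier n \<Longrightarrow> 1 \<in> idx n \<Longrightarrow> Y i 1 = (if i = 1 then 1 else 0)"
  by (cases "i = 0") (auto simp: carr_out idx_def carr_le one_idx2)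

lemma col1': "Y \<in> UT_carrier n \<Longrightarrow> 1 \<in> idx n \<Longrightarrow> Y i (Suc 0) = (if i = Suc 0 then 1 else 0)"
  using col1[of Y n i] by simp

lemma transv_colm': "transv n (Suc 0) s x = colm n s (\<lambda>i. if i = Suc 0 then x else 0)"
  using transv_colm by simp

lemma Inv_mult: "x \<in> UT_carrier n \<Longrightarrow> y \<in> UT_carrier n \<Longrightarrow>
   Inv n (ut_mult n x y) = ut_mult n (Inv n y) (Inv n (x::('a::field) mat))"
proof -
  assume xy: "x \<in> UT_carrier n" "y \<in> UT_carrier n"
  interpret G: group "UT n :: 'a mat monoid" by (rule UT_group)
  show ?thesis using xy G.inv_mult_group by simp
qed

locale pcai =
  fixes n :: enat and chi :: "('a::field) mat \<Rightarrow> 'a mat"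
  assumes cl: "\<And>x. x \<in> UT_carrier n \<Longrightarrow> chi x \<in> UT_carrier n"
    and pc: "\<And>x y. x \<in> UT_carrier n \<Longrightarrow> y \<in> UT_carrier n \<Longrightarrow> chi (ut_comm n x y) = ut_comm n (chi x) (chi y)"
    and ai: "\<And>i j \<alpha>. i \<in> idx n \<Longrightarrow> j \<in> idx n \<Longrightarrow> i < j \<Longrightarrow> chi (transv n i j \<alpha>) = transv n i j \<alpha>"
begin

lemma chi_one: "chi (ut_one n) = ut_one n"
proof -
  have "chi (ut_one n) = chi (ut_comm n (ut_one n) (ut_one n))" by (metis comm_self one_closed)
  also have "\<dots> = ut_comm n (chi (ut_one n)) (chi (ut_one n))" by (rule pc[OF one_closed one_closed])
  also have "\<dots> = ut_one n" by (rule comm_self[OF cl[OF one_closed]])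
  finally show ?thesis .
qed

lemma chi_det:
  assumes Y: "Y \<in> UT_carrier n" and kl: "k < l" "l \<le> r" "r < s" "s \<in> idx n" "1 \<le> k"
  shows "chi (ut_comm n (ut_comm n Y (transv n k l 1)) (transv n r s lam))
       = ut_comm n (ut_comm n (chi Y) (transv n k l 1)) (transv n r s lam)"
proof -
  have lidx: "l \<in> idx n" and ridx: "r \<in> idx n" and kidx: "k \<in> idx n" using kl idx_le by auto
  have t1: "transv n k l 1 \<in> UT_carrier n" by (rule transv_closed) (use kl lidx in auto)
  have t2: "transv n r s lam \<in> UT_carrier n" by (rule transv_closed) (use kl in auto)
  show ?thesis
    using kl kidx lidx ridx
    by (simp add: pc comm_closed Y t1 t2 ai)
qed

lemma C_lemma:
  assumes Y: "Y \<in> UT_carrier n" and l: "2 \<le> l" "l < r" "Suc r \<in> idx n"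
  shows "Inv n (chi Y) l r = Inv n Y l r"
proof -
  have one: "1 \<in> idx n" using l idx_le by auto
  have D: "\<And>Z. Z \<in> UT_carrier n \<Longrightarrow>
      ut_comm n (ut_comm n Z (transv n 1 l 1)) (transv n r (Suc r) 1) = transv n 1 (Suc r) (Inv n Z l r)"
  proof -
    fix Z assume Z: "Z \<in> UT_carrier n"
    show "ut_comm n (ut_comm n Z (transv n 1 l 1)) (transv n r (Suc r) 1) = transv n 1 (Suc r) (Inv n Z l r)"
      using l
      by (subst detector[OF Z]) (auto simp: col1'[OF Z one] transv_colm' intro!: arg_cong[where f="colm n (Suc r)"])
  qed
  have "transv n 1 (Suc r) (Inv n Y l r) = chi (transv n 1 (Suc r) (Inv n Y l r))"
    using ai[OF one l(3)] l by simp
  also have "\<dots> = chi (ut_comm n (ut_comm n Y (transv n 1 l 1)) (transv n r (Suc r) 1))"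
    by (simp only: D[OF Y])
  also have "\<dots> = ut_comm n (ut_comm n (chi Y) (transv n 1 l 1)) (transv n r (Suc r) 1)"
    by (rule chi_det[OF Y]) (use l in auto)
  also have "\<dots> = transv n 1 (Suc r) (Inv n (chi Y) l r)" by (rule D[OF cl[OF Y]])
  finally have "transv n 1 (Suc r) (Inv n Y l r) = transv n 1 (Suc r) (Inv n (chi Y) l r)" .
  hence "transv n 1 (Suc r) (Inv n Y l r) 1 (Suc r) = transv n 1 (Suc r) (Inv n (chi Y) l r) 1 (Suc r)"
    by simp
  thus ?thesis using l by (simp add: transv_def ut_one_def)
qed

lemma COL:
  assumes s: "s \<in> idx n"
  shows "p + 3 \<le> s \<Longrightarrow> (\<And>i. c i \<noteq> 0 \<Longrightarrow> 1 \<le> i \<and> i \<le> p) \<Longrightarrow> chi (colm n s c) = colm n s c"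
proof (induction p arbitrary: c)
  case 0
  have "c = (\<lambda>_. 0)"
  proof
    fix i show "c i = 0" using "0.prems"(2)[of i] by (cases "c i = 0") auto
  qed
  hence "colm n s c = ut_one n" by (simp add: colm_def)
  thus ?case by (simp add: chi_one)
next
  case (Suc p)
  define q where "q = Suc p"
  define \<mu> where "\<mu> = c q"
  define c0 where "c0 = c(q := 0)"
  have IH: "chi (colm n s c0) = colm n s c0"
  proof (rule Suc.IH)
    show "p + 3 \<le> s" using Suc.prems(1) by simp
    fix i assume "c0 i \<noteq> 0"
    thus "1 \<le> i \<and> i \<le> p" using Suc.prems(2)[of i] by (cases "i = q") (auto simp: c0_def q_def)
  qed
  show ?case
  proof (cases "\<mu> = 0")
    case True
    hence "c0 = c" by (auto simp: c0_def \<mu>_def)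
    thus ?thesis using IH by simp
  next
    case False
    define l where "l = Suc q"
    define r where "r = Suc l"
    define d where "d = (\<lambda>i. c0 i / \<mu>)"
    have qidx: "q \<in> idx n" and lidx: "l \<in> idx n" and ridx: "r \<in> idx n"
      using Suc.prems s idx_le by (auto simp: q_def l_def r_def)
    have srl: "r < s" "Suc r \<le> s" using Suc.prems by (auto simp: q_def l_def r_def)
    have dsupp: "\<And>i. d i \<noteq> 0 \<Longrightarrow> 1 \<le> i \<and> i < q"
    proof -
      fix i assume "d i \<noteq> 0"
      hence "c0 i \<noteq> 0" by (simp add: d_def)
      hence "i \<noteq> q" "c i \<noteq> 0" by (auto simp: c0_def split: if_splits)
      thus "1 \<le> i \<and> i < q" using Suc.prems(2)[of i] by (auto simp: q_def)
    qed
    have qlr: "q < l" "l < r" "1 \<le> q" "1 \<le> l" "r \<noteq> q" "l \<noteq> q" by (auto simp: l_def r_def q_def)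
    have A: "colm n q d \<in> UT_carrier n" by (rule colm_closed[OF qidx dsupp])
    have T: "transv n l r (-1) \<in> UT_carrier n" by (rule transv_closed[OF _ ridx]) (use qlr in auto)
    define a where "a = ut_mult n (colm n q d) (transv n l r (-1))"
    have a: "a \<in> UT_carrier n" unfolding a_def by (rule mult_closed[OF A T])
    have acol: "\<And>i. a i q = ut_one n i q + d i"
      unfolding a_def by (subst RT[OF A qlr(2) ridx qlr(4)]) (use qlr in \<open>auto simp: colm_def\<close>)
    have rowA: "\<And>j. colm n q d l j = ut_one n l j"
      using dsupp[of l] by (auto simp: colm_def l_def)
    have ainv: "Inv n a l r = 1"
    proof -
      have "Inv n a = ut_mult n (transv n l r 1) (Inv n (colm n q d))"
        unfolding a_def by (simp add: Inv_mult[OF A T] inv_transv[OF qlr(2) ridx qlr(4)])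
      hence "Inv n a l r = Inv n (colm n q d) l r + Inv n (colm n q d) r r"
        by (simp add: LT[OF Inv_closed[OF A] qlr(2) ridx qlr(4)])
      also have "\<dots> = 1"
        using RTI[OF A lidx rowA, of r] carr_diag[OF Inv_closed[OF A] ridx]
        using qlr by (simp add: ut_one_def)
      finally show ?thesis .
    qed
    have det1: "ut_comm n (ut_comm n a (transv n q l 1)) (transv n l s \<mu>) = colm n s c0"
    proof -
      have "ut_comm n (ut_comm n a (transv n q l 1)) (transv n l s \<mu>)
          = colm n s (\<lambda>i. \<mu> * (a i q * Inv n a l l - (if i = q \<and> l = l then 1 else 0)))"
        by (rule detector[OF a]) (use qlr srl s in auto)
      also have "\<dots> = colm n s c0"
      proof (rule arg_cong[where f="colm n s"], rule ext)
        fix i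
        show "\<mu> * (a i q * Inv n a l l - (if i = q \<and> l = l then 1 else 0)) = c0 i"
          using carr_diag[OF Inv_closed[OF a] lidx] False
          by (simp add: acol one_idx2[OF qidx] d_def)
      qed
      finally show ?thesis .
    qed
    have det2: "ut_comm n (ut_comm n a (transv n q l 1)) (transv n r s \<mu>) = colm n s c"
    proof -
      have "ut_comm n (ut_comm n a (transv n q l 1)) (transv n r s \<mu>)
          = colm n s (\<lambda>i. \<mu> * (a i q * Inv n a l r - (if i = q \<and> l = r then 1 else 0)))"
        by (rule detector[OF a]) (use qlr srl s in auto)
      also have "\<dots> = colm n s c"
      proof (rule arg_cong[where f="colm n s"], rule ext)
        fix i
        show "\<mu> * (a i q * Inv n a l r - (if i = q \<and> l = r then 1 else 0)) = c i"
          using False qlr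
          by (cases "i = q") (simp_all add: acol ainv one_idx2[OF qidx] d_def c0_def \<mu>_def)
      qed
      finally show ?thesis .
    qed
    define b where "b = chi a"
    have b: "b \<in> UT_carrier n" unfolding b_def by (rule cl[OF a])
    have "colm n s c0 = chi (ut_comm n (ut_comm n a (transv n q l 1)) (transv n l s \<mu>))"
      using IH det1 by simp
    also have "\<dots> = ut_comm n (ut_comm n b (transv n q l 1)) (transv n l s \<mu>)"
      unfolding b_def by (rule chi_det[OF a]) (use qlr srl s in auto)
    also have "\<dots> = colm n s (\<lambda>i. \<mu> * (b i q * Inv n b l l - (if i = q \<and> l = l then 1 else 0)))"
      by (rule detector[OF b]) (use qlr srl s in auto)
    finally have c0b': "colm n s c0 = colm n s (\<lambda>i. \<mu> * (b i q * Inv n b l l - (if i = q \<and> l = l then 1 else 0)))" .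
    have c0b: "\<And>i. c0 i = \<mu> * (b i q - (if i = q then 1 else 0))"
    proof -
      fix i
      have "c0 i = \<mu> * (b i q * Inv n b l l - (if i = q \<and> l = l then 1 else 0))"
        by (rule colm_inj[OF c0b'])
      thus "c0 i = \<mu> * (b i q - (if i = q then 1 else 0))"
        using carr_diag[OF Inv_closed[OF b] lidx] by simp
    qed
    have binv: "Inv n b l r = 1"
      using C_lemma[OF a, of l r] ainv qlr srl s idx_le[OF s, of "Suc r"]
      by (simp add: b_def l_def q_def)
    have "chi (colm n s c) = chi (ut_comm n (ut_comm n a (transv n q l 1)) (transv n r s \<mu>))"
      using det2 by simp
    also have "\<dots> = ut_comm n (ut_comm n b (transv n q l 1)) (transv n r s \<mu>)"
      unfolding b_def by (rule chi_det[OF a]) (use qlr srl s in auto)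
    also have "\<dots> = colm n s (\<lambda>i. \<mu> * (b i q * Inv n b l r - (if i = q \<and> l = r then 1 else 0)))"
      by (rule detector[OF b]) (use qlr srl s in auto)
    also have "\<dots> = colm n s c"
    proof (rule arg_cong[where f="colm n s"], rule ext)
      fix i
      show "\<mu> * (b i q * Inv n b l r - (if i = q \<and> l = r then 1 else 0)) = c i"
        using qlr c0b[of i] binv False
        by (cases "i = q") (simp_all add: c0_def \<mu>_def algebra_simps)
    qed
    finally show ?thesis .
  qed
qed

lemma A_lemma:
  assumes Y: "Y \<in> UT_carrier n" and j: "Suc (Suc j) \<in> idx n"
  shows "chi Y i j = Y i j"
proof (cases "j = 0")
  case True thus ?thesis using carr_out[OF Y] carr_out[OF cl[OF Y]] by (simp add: idx_def)
next
  case False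
  define s where "s = Suc (Suc j)"
  have s: "s \<in> idx n" using j by (simp add: s_def)
  have jidx: "j \<in> idx n" "Suc j \<in> idx n" using j False idx_le by auto
  have D: "\<And>Z. Z \<in> UT_carrier n \<Longrightarrow>
      ut_comm n (ut_comm n Z (transv n j (Suc j) 1)) (transv n (Suc j) s 1)
        = colm n s (\<lambda>i. Z i j - (if i = j then 1 else 0))"
  proof -
    fix Z assume Z: "Z \<in> UT_carrier n"
    show "ut_comm n (ut_comm n Z (transv n j (Suc j) 1)) (transv n (Suc j) s 1)
        = colm n s (\<lambda>i. Z i j - (if i = j then 1 else 0))"
      using False s carr_diag[OF Inv_closed[OF Z] jidx(2)]
      by (subst detector[OF Z]) (auto simp: s_def)
  qed
  have supp: "\<And>i. Y i j - (if i = j then 1 else 0) \<noteq> 0 \<Longrightarrow> 1 \<le> i \<and> i \<le> j - 1"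
  proof -
    fix i assume "Y i j - (if i = j then 1 else 0) \<noteq> 0"
    thus "1 \<le> i \<and> i \<le> j - 1"
      using carr_out[OF Y, of 0 j] carr_below[OF Y, of j i] carr_diag[OF Y jidx(1)] False
      by (cases "i = 0"; cases "i < j"; cases "i = j") (auto simp: idx_def)
  qed
  have "colm n s (\<lambda>i. Y i j - (if i = j then 1 else 0)) = chi (colm n s (\<lambda>i. Y i j - (if i = j then 1 else 0)))"
    by (rule COL[OF s, symmetric]) (use False supp in \<open>auto simp: s_def\<close>)
  also have "\<dots> = chi (ut_comm n (ut_comm n Y (transv n j (Suc j) 1)) (transv n (Suc j) s 1))"
    by (simp only: D[OF Y])
  also have "\<dots> = ut_comm n (ut_comm n (chi Y) (transv n j (Suc j) 1)) (transv n (Suc j) s 1)"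
    by (rule chi_det[OF Y]) (use False s in \<open>auto simp: s_def\<close>)
  also have "\<dots> = colm n s (\<lambda>i. chi Y i j - (if i = j then 1 else 0))" by (rule D[OF cl[OF Y]])
  finally have "colm n s (\<lambda>i. Y i j - (if i = j then 1 else 0)) = colm n s (\<lambda>i. chi Y i j - (if i = j then 1 else 0))" .
  from colm_inj[OF this, of i] show ?thesis by simp
qed

end

definition tau :: "nat \<Rightarrow> ('a::field) mat \<Rightarrow> 'a mat" where
  "tau m A = (\<lambda>i j. A (Suc m - j) (Suc m - i))"

definition theta :: "nat \<Rightarrow> ('a::field) mat \<Rightarrow> 'a mat" where
  "theta m x = tau m (Inv (enat m) x)"

lemma idx_fin: "i \<in> idx (enat m) \<longleftrightarrow> 1 \<le> i \<and> i \<le> m" by (simp add: idx_def)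

lemma rev_idx: "i \<in> idx (enat m) \<Longrightarrow> Suc m - i \<in> idx (enat m)"
  by (auto simp: idx_fin)
lemma rev_rev: "i \<in> idx (enat m) \<Longrightarrow> Suc m - (Suc m - i) = i"
  by (auto simp: idx_fin)
lemma rev_nidx: "i \<notin> idx (enat m) \<Longrightarrow> Suc m - i \<notin> idx (enat m)"
  by (auto simp: idx_fin)

lemma tau_closed:
  assumes A: "A \<in> UT_carrier (enat m)"
  shows "tau m A \<in> UT_carrier (enat m)"
  unfolding UT_carrier_def tau_def
proof (intro CollectI conjI allI impI ballI)
  fix i j assume "i \<notin> idx (enat m) \<or> j \<notin> idx (enat m)"
  thus "A (Suc m - j) (Suc m - i) = 0" using carr_out[OF A] rev_nidx by blast
next
  fix i assume "i \<in> idx (enat m)"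
  thus "A (Suc m - i) (Suc m - i) = 1" using carr_diag[OF A] rev_idx by blast
next
  fix i j :: nat assume ji: "j < i"
  show "A (Suc m - j) (Suc m - i) = 0"
  proof (cases "i \<in> idx (enat m)")
    case True
    hence "Suc m - i < Suc m - j" using ji by (auto simp: idx_fin)
    thus ?thesis by (rule carr_below[OF A])
  next
    case False thus ?thesis using carr_out[OF A] rev_nidx by blast
  qed
qed

lemma sum_rev:
  assumes "1 \<le> i" "j \<le> m"
  shows "(\<Sum>k\<in>{Suc m - j..Suc m - i}. f k) = (\<Sum>k\<in>{i..j}. f (Suc m - k))"
  by (rule sum.reindex_bij_witness[of _ "\<lambda>k. Suc m - k" "\<lambda>k. Suc m - k"]) (use assms in auto)

lemma tau_mult:
  assumes A: "A \<in> UT_carrier (enat m)" and B: "B \<in> UT_carrier (enat m)"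
  shows "tau m (ut_mult (enat m) A B) = ut_mult (enat m) (tau m B) (tau m A)"
proof (intro ext)
  fix i j
  show "tau m (ut_mult (enat m) A B) i j = ut_mult (enat m) (tau m B) (tau m A) i j"
  proof (cases "i \<in> idx (enat m) \<and> j \<in> idx (enat m)")
    case True
    have "tau m (ut_mult (enat m) A B) i j = (\<Sum>k\<in>{Suc m - j..Suc m - i}. A (Suc m - j) k * B k (Suc m - i))"
      by (simp add: tau_def mult_eq[OF A B])
    also have "\<dots> = (\<Sum>k\<in>{i..j}. A (Suc m - j) (Suc m - k) * B (Suc m - k) (Suc m - i))"
      by (rule sum_rev) (use True in \<open>auto simp: idx_fin\<close>)
    also have "\<dots> = ut_mult (enat m) (tau m B) (tau m A) i j"
      unfolding mult_eq[OF tau_closed[OF B] tau_closed[OF A]] by (simp add: tau_def mult.commute)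
    finally show ?thesis .
  next
    case False
    thus ?thesis
      using carr_out[OF tau_closed[OF mult_closed[OF A B]]] carr_out[OF mult_closed[OF tau_closed[OF B] tau_closed[OF A]]]
      by metis
  qed
qed

lemma tau_one: "tau m (ut_one (enat m)) = (ut_one (enat m) :: ('a::field) mat)"
proof (intro ext)
  fix i j
  show "tau m (ut_one (enat m)) i j = (ut_one (enat m) i j :: 'a)"
  proof (cases "i \<in> idx (enat m) \<and> j \<in> idx (enat m)")
    case True
    hence "Suc m - j = Suc m - i \<longleftrightarrow> j = i" unfolding idx_fin by linarith
    thus ?thesis using True rev_idx[of j m] by (simp add: tau_def ut_one_def)
  next
    case False
    have "ut_one (enat m) i j = (0::'a)" unfolding ut_one_def using False by auto
    moreover have "ut_one (enat m) (Suc m - j) (Suc m - i) = (0::'a)"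
    proof (cases "i \<in> idx (enat m)")
      case True with False have "j \<notin> idx (enat m)" by blast
      thus ?thesis using rev_nidx[of j m] unfolding ut_one_def by simp
    next
      case False thus ?thesis using rev_nidx[of i m] unfolding ut_one_def by (metis (full_types))
    qed
    ultimately show ?thesis unfolding tau_def by simp
  qed
qed

lemma tau_tau:
  assumes A: "A \<in> UT_carrier (enat m)"
  shows "tau m (tau m A) = A"
proof (intro ext)
  fix i j
  show "tau m (tau m A) i j = A i j"
  proof (cases "i \<in> idx (enat m) \<and> j \<in> idx (enat m)")
    case True thus ?thesis by (simp add: tau_def rev_rev)
  next
    case False thus ?thesis
      using carr_out[OF tau_closed[OF tau_closed[OF A]]] carr_out[OF A] by metis
  qed
qed

lemma tau_Inv:
  assumes A: "A \<in> UT_carrier (enat m)"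
  shows "Inv (enat m) (tau m A) = tau m (Inv (enat m) A)"
proof (rule inv_eq[OF tau_closed[OF Inv_closed[OF A]] tau_closed[OF A]])
  show "ut_mult (enat m) (tau m (Inv (enat m) A)) (tau m A) = ut_one (enat m)"
    by (simp add: tau_mult[OF A Inv_closed[OF A], symmetric] r_inv[OF A] tau_one)
qed

lemma Inv_Inv: "x \<in> UT_carrier n \<Longrightarrow> Inv n (Inv n x) = (x::('a::field) mat)"
proof -
  assume x: "x \<in> UT_carrier n"
  interpret G: group "UT n :: 'a mat monoid" by (rule UT_group)
  show ?thesis using x G.inv_inv by simp
qed

lemma theta_closed: "x \<in> UT_carrier (enat m) \<Longrightarrow> theta m x \<in> UT_carrier (enat m)"
  by (simp add: theta_def tau_closed Inv_closed)

lemma theta_mult: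
  assumes x: "x \<in> UT_carrier (enat m)" and y: "y \<in> UT_carrier (enat m)"
  shows "theta m (ut_mult (enat m) x y) = ut_mult (enat m) (theta m x) (theta m y)"
  by (simp add: theta_def Inv_mult[OF x y] tau_mult Inv_closed x y)

lemma theta_Inv:
  assumes x: "x \<in> UT_carrier (enat m)"
  shows "theta m (Inv (enat m) x) = Inv (enat m) (theta m x)"
  by (simp add: theta_def Inv_Inv[OF x] tau_Inv[OF Inv_closed[OF x]])

lemma theta_comm:
  assumes x: "x \<in> UT_carrier (enat m)" and y: "y \<in> UT_carrier (enat m)"
  shows "theta m (ut_comm (enat m) x y) = ut_comm (enat m) (theta m x) (theta m y)"
  unfolding comm_unfold
  by (simp add: theta_mult theta_Inv mult_closed Inv_closed x y)

lemma theta_theta: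
  assumes x: "x \<in> UT_carrier (enat m)"
  shows "theta m (theta m x) = x"
  by (simp add: theta_def tau_Inv[OF Inv_closed[OF x]] Inv_Inv[OF x] tau_tau x)

lemma theta_transv:
  assumes pq: "1 \<le> p" "p < q" "q \<le> m"
  shows "theta m (transv (enat m) p q \<alpha>) = transv (enat m) (Suc m - q) (Suc m - p) (-\<alpha>)"
proof -
  have qidx: "q \<in> idx (enat m)" using pq by (simp add: idx_fin)
  have "theta m (transv (enat m) p q \<alpha>) = tau m (transv (enat m) p q (-\<alpha>))"
    by (simp add: theta_def inv_transv[OF pq(2) qidx pq(1)])
  also have "\<dots> = transv (enat m) (Suc m - q) (Suc m - p) (-\<alpha>)"
  proof (intro ext)
    fix i j
    have "ut_one (enat m) (Suc m - j) (Suc m - i) = ut_one (enat m) i j"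
      using fun_cong[OF fun_cong[OF tau_one[of m]], of i j] by (simp add: tau_def)
    moreover have "(Suc m - j = p \<and> Suc m - i = q) \<longleftrightarrow> (i = Suc m - q \<and> j = Suc m - p)"
      using pq by auto
    ultimately show "tau m (transv (enat m) p q (-\<alpha>)) i j = transv (enat m) (Suc m - q) (Suc m - p) (-\<alpha>) i j"
      by (simp add: tau_def transv_def)
  qed
  finally show ?thesis .
qed

lemma pcai_theta:
  assumes P: "pcai (enat m) chi"
  shows "pcai (enat m) (\<lambda>x. theta m (chi (theta m x)))"
proof -
  interpret P: pcai "enat m" chi by (rule P)
  show ?thesis
  proof
    fix x :: "'a mat" assume "x \<in> UT_carrier (enat m)"
    thus "theta m (chi (theta m x)) \<in> UT_carrier (enat m)" by (simp add: theta_closed P.cl)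
  next
    fix x y :: "'a mat" assume x: "x \<in> UT_carrier (enat m)" and y: "y \<in> UT_carrier (enat m)"
    show "theta m (chi (theta m (ut_comm (enat m) x y)))
        = ut_comm (enat m) (theta m (chi (theta m x))) (theta m (chi (theta m y)))"
    proof -
      have "theta m (chi (theta m (ut_comm (enat m) x y))) = theta m (chi (ut_comm (enat m) (theta m x) (theta m y)))"
        by (simp only: theta_comm[OF x y])
      also have "\<dots> = theta m (ut_comm (enat m) (chi (theta m x)) (chi (theta m y)))"
        by (simp only: P.pc[OF theta_closed[OF x] theta_closed[OF y]])
      also have "\<dots> = ut_comm (enat m) (theta m (chi (theta m x))) (theta m (chi (theta m y)))"
        by (rule theta_comm[OF P.cl[OF theta_closed[OF x]] P.cl[OF theta_closed[OF y]]])
      finally show ?thesis .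
    qed
  next
    fix i j :: nat and \<alpha> :: 'a
    assume i: "i \<in> idx (enat m)" and j: "j \<in> idx (enat m)" and ij: "i < j"
    have "theta m (transv (enat m) i j \<alpha>) = transv (enat m) (Suc m - j) (Suc m - i) (-\<alpha>)"
      by (rule theta_transv) (use i j ij in \<open>auto simp: idx_fin\<close>)
    moreover have "chi (transv (enat m) (Suc m - j) (Suc m - i) (-\<alpha>)) = transv (enat m) (Suc m - j) (Suc m - i) (-\<alpha>)"
      by (rule P.ai) (use i j ij in \<open>auto simp: idx_fin\<close>)
    moreover have "theta m (transv (enat m) (Suc m - j) (Suc m - i) (-\<alpha>)) = transv (enat m) i j \<alpha>"
      using theta_transv[of "Suc m - j" "Suc m - i" m "-\<alpha>"] i j ij by (auto simp: idx_fin)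
    ultimately show "theta m (chi (theta m (transv (enat m) i j \<alpha>))) = transv (enat m) i j \<alpha>" by simp
  qed
qed

lemma lastrow:
  assumes x: "x \<in> UT_carrier (enat m)" and m: "1 \<le> m"
  shows "x m j = (if j = m then 1 else 0)"
proof -
  have midx: "m \<in> idx (enat m)" using m by (simp add: idx_fin)
  show ?thesis
  proof (cases "j < m")
    case True thus ?thesis using carr_below[OF x] by simp
  next
    case False
    show ?thesis
    proof (cases "j = m")
      case True thus ?thesis using carr_diag[OF x midx] by simp
    next
      case False
      hence "j \<notin> idx (enat m)" using \<open>\<not> j < m\<close> by (simp add: idx_fin)
      thus ?thesis using carr_out[OF x] False by simp
    qed
  qed
qed

lemma one_center: "ut_one n \<in> ut_center n"
  unfolding ut_center_def by (simp add: one_closed one_left one_right)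

lemma one_center2: "ut_one n \<in> ut_center2 n"
  unfolding ut_center2_def
proof (intro CollectI conjI ballI)
  show "ut_one n \<in> UT_carrier n" by (rule one_closed)
  fix x assume x: "x \<in> UT_carrier n"
  have "ut_comm n (ut_one n) x = ut_one n"
    unfolding comm_unfold
    by (simp add: one_left x mult_closed Inv_closed one_closed r_inv one_right
        inv_eq[OF one_closed one_closed one_left[OF one_closed]])
  thus "ut_comm n (ut_one n) x \<in> ut_center n" by (simp add: one_center)
qed

lemma t1m_center:
  assumes m: "2 \<le> m"
  shows "transv (enat m) 1 m c \<in> ut_center (enat m)"
  unfolding ut_center_def
proof (intro CollectI conjI ballI)
  have midx: "m \<in> idx (enat m)" "1 \<in> idx (enat m)" using m by (auto simp: idx_fin)
  show T: "transv (enat m) 1 m c \<in> UT_carrier (enat m)" by (rule transv_closed) (use m midx in auto)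
  fix x :: "'a mat" assume x: "x \<in> UT_carrier (enat m)"
  show "ut_mult (enat m) (transv (enat m) 1 m c) x = ut_mult (enat m) x (transv (enat m) 1 m c)"
  proof (intro ext)
    fix i j
    show "ut_mult (enat m) (transv (enat m) 1 m c) x i j = ut_mult (enat m) x (transv (enat m) 1 m c) i j"
      using m midx
      by (simp add: LT[OF x] RT[OF x] lastrow[OF x] col1'[OF x midx(2)])
  qed
qed

lemma small_abelian:
  assumes m: "m \<le> 2" and x: "x \<in> UT_carrier (enat m)" and y: "y \<in> UT_carrier (enat m)"
  shows "ut_mult (enat m) x y = ut_mult (enat m) y x"
proof (intro ext)
  fix i j
  show "ut_mult (enat m) x y i j = ut_mult (enat m) y x i j"
  proof (cases "i = 1 \<and> j = 2 \<and> 2 \<le> m")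
    case True
    hence "{i..j} = {1, 2}" by auto
    moreover have "1 \<in> idx (enat m)" "2 \<in> idx (enat m)" using True by (auto simp: idx_fin)
    hence "x 1 1 = 1" "y 1 1 = 1" "x 2 2 = 1" "y 2 2 = 1"
      using carr_diag[OF x] carr_diag[OF y] by auto
    ultimately show ?thesis using True by (simp add: mult_eq[OF x y] mult_eq[OF y x])
  next
    case False
    show ?thesis
    proof (cases "i < j")
      case True
      with False m have "i \<notin> idx (enat m) \<or> j \<notin> idx (enat m)" by (auto simp: idx_fin)
      thus ?thesis using carr_out[OF mult_closed[OF x y]] carr_out[OF mult_closed[OF y x]] by metis
    next
      case False
      thus ?thesis using carr_le[OF mult_closed[OF x y]] carr_le[OF mult_closed[OF y x]] by simp
    qed
  qed
qed


lemma comm_of_eq: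
  assumes x: "x \<in> UT_carrier n" and z: "z \<in> UT_carrier n" and T: "T \<in> UT_carrier n"
    and eq: "ut_mult n z x = ut_mult n T (ut_mult n x z)"
  shows "ut_comm n z x = (T::('a::field) mat)"
proof -
  have "ut_comm n z x = ut_mult n (ut_mult n (ut_mult n T (ut_mult n x z)) (Inv n z)) (Inv n x)"
    unfolding comm_unfold eq ..
  also have "\<dots> = ut_mult n (ut_mult n T (ut_mult n (ut_mult n x z) (Inv n z))) (Inv n x)"
    by (subst mult_assoc[OF T mult_closed[OF x z] Inv_closed[OF z]]) (rule refl)
  also have "\<dots> = ut_mult n (ut_mult n T x) (Inv n x)"
    by (subst mult_assoc[OF x z Inv_closed[OF z]]) (simp add: r_inv[OF z] one_right[OF x])
  also have "\<dots> = T"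
    by (subst mult_assoc[OF T x Inv_closed[OF x]]) (simp add: r_inv[OF x] one_right[OF T])
  finally show ?thesis .
qed

lemma C2_lemma:
  assumes z: "z \<in> UT_carrier (enat m)"
    and zE: "\<And>i j. (i, j) \<notin> {(1, m - 1), (1, m), (2, m)} \<Longrightarrow> z i j = ut_one (enat m) i j"
  shows "z \<in> ut_center2 (enat m)"
  unfolding ut_center2_def
proof (intro CollectI conjI ballI)
  show "z \<in> UT_carrier (enat m)" by (rule z)
  fix x :: "'a mat" assume x: "x \<in> UT_carrier (enat m)"
  show "ut_comm (enat m) z x \<in> ut_center (enat m)"
  proof (cases "m \<le> 2")
    case True
    have cz: "ut_comm (enat m) z x \<in> UT_carrier (enat m)" by (rule comm_closed[OF z x])
    show ?thesis unfolding ut_center_def using cz small_abelian[OF True cz] by auto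
  next
    case False
    hence m3: "3 \<le> m" by simp
    have mm: "m - 1 \<noteq> 1" "m \<noteq> 1" "m \<noteq> m - 1" "m - Suc 0 \<noteq> Suc 0" "m \<noteq> Suc 0" "m \<noteq> m - Suc 0"
      using m3 by auto
    define \<alpha> where "\<alpha> = z 1 (m - 1)"
    define \<beta> where "\<beta> = z 1 m"
    define \<gamma> where "\<gamma> = z 2 m"
    have i1: "1 \<in> idx (enat m)" and i2: "2 \<in> idx (enat m)" and im1: "m - 1 \<in> idx (enat m)"
      and im: "m \<in> idx (enat m)" using m3 by (auto simp: idx_fin)
    define T2 where "T2 = transv (enat m) 2 m \<gamma>"
    define T1 where "T1 = transv (enat m) 1 (m - 1) \<alpha>"
    define T3 where "T3 = transv (enat m) 1 m \<beta>"
    have T2: "T2 \<in> UT_carrier (enat m)" unfolding T2_def by (rule transv_closed) (use m3 im in auto)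
    have T1: "T1 \<in> UT_carrier (enat m)" unfolding T1_def by (rule transv_closed) (use m3 im1 in auto)
    have T3: "T3 \<in> UT_carrier (enat m)" unfolding T3_def by (rule transv_closed) (use m3 im in auto)
    have zdec: "z = ut_mult (enat m) (ut_mult (enat m) T2 T1) T3"
    proof (intro ext)
      fix i j
      have r2: "\<And>i j. ut_mult (enat m) T2 T1 i j = T2 i j + (if j = m - 1 then \<alpha> * T2 i 1 else 0)"
        unfolding T1_def by (rule RT[OF T2]) (use m3 im1 in auto)
      have r1: "ut_mult (enat m) (ut_mult (enat m) T2 T1) T3 i j
           = ut_mult (enat m) T2 T1 i j + (if j = m then \<beta> * ut_mult (enat m) T2 T1 i 1 else 0)"
        unfolding T3_def by (rule RT[OF mult_closed[OF T2 T1]]) (use m3 im in auto)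
      have t2: "\<And>i j. T2 i j = ut_one (enat m) i j + (if i = 2 \<and> j = m then \<gamma> else 0)"
        by (simp add: T2_def transv_def)
      have r: "ut_mult (enat m) (ut_mult (enat m) T2 T1) T3 i j
          = ut_one (enat m) i j + (if i = 2 \<and> j = m then \<gamma> else 0)
            + (if i = 1 \<and> j = m - 1 then \<alpha> else 0) + (if i = 1 \<and> j = m then \<beta> else 0)"
        unfolding r1 r2 t2 using mm by (simp add: one_idx2[OF i1, simplified])
      show "z i j = ut_mult (enat m) (ut_mult (enat m) T2 T1) T3 i j"
      proof (cases "(i, j) \<in> {(1, m - 1), (1, m), (2, m)}")
        case True
        thus ?thesis using m3 unfolding r by (auto simp: \<alpha>_def \<beta>_def \<gamma>_def ut_one_def)
      next
        case False
        thus ?thesis unfolding r using zE[OF False] by auto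
      qed
    qed
    define c where "c = \<alpha> * x (m - 1) m - \<gamma> * x 1 2"
    have T: "transv (enat m) 1 m c \<in> UT_carrier (enat m)" by (rule transv_closed) (use m3 im in auto)
    have zx: "ut_mult (enat m) z x = ut_mult (enat m) (transv (enat m) 1 m c) (ut_mult (enat m) x z)"
    proof (intro ext)
      fix i j
      have xm: "\<And>j. x m j = (if j = m then 1 else 0)" using lastrow[OF x] m3 by simp
      have x1: "\<And>i. x i (Suc 0) = (if i = Suc 0 then 1 else 0)" using col1'[OF x i1] by simp
      have xm1: "x (m - 1) j = (if j = m - 1 then 1 else if j = m then x (m - 1) m else 0)"
      proof -
        have "j < m - 1 \<or> j = m - 1 \<or> j = m \<or> m < j" by linarith
        moreover have "m < j \<Longrightarrow> j \<notin> idx (enat m)" by (simp add: idx_fin)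
        ultimately show ?thesis
          using carr_below[OF x, of j "m - 1"] carr_diag[OF x im1] carr_out[OF x, of "m - 1" j] m3
          by auto
      qed
      have x2: "x i 2 = (if i = 2 then 1 else if i = 1 then x 1 2 else 0)"
        using carr_below[OF x, of 2 i] carr_diag[OF x i2] carr_out[OF x, of 0 2]
        by (cases "i = 0"; cases "i = 1"; cases "i = 2") (auto simp: idx_fin)
      have L: "ut_mult (enat m) z x i j = x i j + (if i = 1 \<and> j = m then \<beta> else 0)
           + (if i = 1 then \<alpha> * x (m - 1) j else 0) + (if i = 2 \<and> j = m then \<gamma> else 0)"
      proof -
        have "ut_mult (enat m) z x = ut_mult (enat m) T2 (ut_mult (enat m) T1 (ut_mult (enat m) T3 x))"
          by (simp add: zdec mult_assoc mult_closed T1 T2 T3 x)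
        thus ?thesis
          unfolding T1_def T2_def T3_def using m3 im im1 i1 mm
          by (simp add: LT mult_closed transv_closed x xm)
      qed
      have R: "ut_mult (enat m) (transv (enat m) 1 m c) (ut_mult (enat m) x z) i j
         = x i j + (if j = m then \<gamma> * x i 2 else 0) + (if j = m - 1 \<and> i = 1 then \<alpha> else 0)
           + (if j = m \<and> i = 1 then \<beta> else 0) + (if i = 1 \<and> j = m then c else 0)"
      proof -
        have xz: "ut_mult (enat m) x z = ut_mult (enat m) (ut_mult (enat m) (ut_mult (enat m) x T2) T1) T3"
          by (simp add: zdec mult_assoc mult_closed T1 T2 T3 x)
        have xz_in: "ut_mult (enat m) x z \<in> UT_carrier (enat m)" by (rule mult_closed[OF x z])
        have xzm: "ut_mult (enat m) x z m j = (if j = m then 1 else 0)" using lastrow[OF xz_in] m3 by simp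
        have Rm: "ut_mult (enat m) (transv (enat m) 1 m c) (ut_mult (enat m) x z) i j
            = ut_mult (enat m) x z i j + (if i = 1 then c * ut_mult (enat m) x z m j else 0)"
          by (rule LT[OF xz_in]) (use m3 im in auto)
        have xzij: "ut_mult (enat m) x z i j = x i j + (if j = m then \<gamma> * x i 2 else 0)
            + (if j = m - 1 \<and> i = 1 then \<alpha> else 0) + (if j = m \<and> i = 1 then \<beta> else 0)"
          unfolding xz T1_def T2_def T3_def using m3 im im1 i1 mm
          by (simp add: RT mult_closed transv_closed x x1)
        show ?thesis unfolding Rm xzm xzij by simp
      qed
      show "ut_mult (enat m) z x i j = ut_mult (enat m) (transv (enat m) 1 m c) (ut_mult (enat m) x z) i j"
        unfolding L R using m3 xm1 x2
        by (cases "i = 1"; cases "i = 2"; cases "j = m"; cases "j = m - 1") (auto simp: c_def algebra_simps)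
    qed
    have "ut_comm (enat m) z x = transv (enat m) 1 m c"
      by (rule comm_of_eq[OF x z T zx])
    thus ?thesis using t1m_center[of m c] m3 by simp
  qed
qed


lemma fin_main:
  assumes P0: "pcai (enat m) chi" and a: "a \<in> UT_carrier (enat m)"
    and E: "(i, j) \<notin> {(1, m - 1), (1, m), (2, m)}"
  shows "chi a i j = a i j"
proof -
  interpret P: pcai "enat m" chi by (rule P0)
  interpret Q: pcai "enat m" "\<lambda>x. theta m (chi (theta m x))" by (rule pcai_theta[OF P0])
  define b where "b = chi a"
  have b: "b \<in> UT_carrier (enat m)" unfolding b_def by (rule P.cl[OF a])
  have F1: "\<And>i j. Suc (Suc j) \<le> m \<Longrightarrow> b i j = a i j"
    unfolding b_def by (rule P.A_lemma[OF a]) (simp add: idx_fin)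
  define y where "y = theta m a"
  have y: "y \<in> UT_carrier (enat m)" unfolding y_def by (rule theta_closed[OF a])
  have psiy: "theta m (chi (theta m y)) = theta m b"
    unfolding y_def b_def by (simp add: theta_theta[OF a])
  have F2: "\<And>P Q. 3 \<le> P \<Longrightarrow> P \<le> m \<Longrightarrow> Inv (enat m) b P Q = Inv (enat m) a P Q"
  proof -
    fix P Q :: nat assume P: "3 \<le> P" "P \<le> m"
    show "Inv (enat m) b P Q = Inv (enat m) a P Q"
    proof (cases "1 \<le> Q \<and> Q \<le> m")
      case True
      have "theta m (chi (theta m y)) (Suc m - Q) (Suc m - P) = y (Suc m - Q) (Suc m - P)"
        by (rule Q.A_lemma[OF y]) (use P in \<open>simp add: idx_fin\<close>)
      from this[unfolded psiy, unfolded y_def]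
      have "theta m b (Suc m - Q) (Suc m - P) = theta m a (Suc m - Q) (Suc m - P)" .
      thus ?thesis using True P by (simp add: theta_def tau_def)
    next
      case False
      hence "Q \<notin> idx (enat m)" by (simp add: idx_fin)
      thus ?thesis using carr_out[OF Inv_closed[OF b]] carr_out[OF Inv_closed[OF a]] by metis
    qed
  qed
  have F3: "\<And>P Q. 2 \<le> P \<Longrightarrow> Q < m \<Longrightarrow> b P Q = a P Q"
  proof -
    fix P Q :: nat assume P: "2 \<le> P" "Q < m"
    show "b P Q = a P Q"
    proof (cases "Q \<le> P")
      case True thus ?thesis using carr_le[OF b] carr_le[OF a] by simp
    next
      case False
      have "Inv (enat m) (theta m (chi (theta m y))) (Suc m - Q) (Suc m - P) = Inv (enat m) y (Suc m - Q) (Suc m - P)"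
        by (rule Q.C_lemma[OF y]) (use P False in \<open>auto simp: idx_fin\<close>)
      from this[unfolded psiy, unfolded y_def]
      have "Inv (enat m) (theta m b) (Suc m - Q) (Suc m - P) = Inv (enat m) (theta m a) (Suc m - Q) (Suc m - P)" .
      hence "tau m b (Suc m - Q) (Suc m - P) = tau m a (Suc m - Q) (Suc m - P)"
        by (simp add: theta_def tau_Inv[OF Inv_closed[OF b]] tau_Inv[OF Inv_closed[OF a]] Inv_Inv[OF a] Inv_Inv[OF b])
      thus ?thesis using P False by (simp add: tau_def)
    qed
  qed
  show ?thesis
  proof (cases "j \<le> i")
    case True thus ?thesis using carr_le[OF b] carr_le[OF a] by (simp add: b_def)
  next
    case False
    show ?thesis
    proof (cases "i = 0 \<or> m < j")
      case True
      hence "i \<notin> idx (enat m) \<or> j \<notin> idx (enat m)" by (auto simp: idx_fin)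
      thus ?thesis using carr_out[OF b] carr_out[OF a] by (metis b_def)
    next
      case False
      hence ij: "1 \<le> i" "i < j" "j \<le> m" using \<open>\<not> j \<le> i\<close> by auto
      show ?thesis
      proof (cases "Suc (Suc j) \<le> m")
        case True thus ?thesis using F1 by (simp add: b_def)
      next
        case False
        show ?thesis
        proof (cases "2 \<le> i \<and> j < m")
          case True thus ?thesis using F3 by (simp add: b_def)
        next
          case False
          have jm: "j = m - 1 \<or> j = m" using \<open>\<not> Suc (Suc j) \<le> m\<close> ij by auto
          have jeq: "j = m"
          proof (rule ccontr)
            assume "j \<noteq> m"
            hence j1: "j = m - 1" "j < m" using jm ij by auto
            hence "i = 1" using False ij by auto
            thus False using E j1 by auto
          qed
          have i3: "3 \<le> i" using E jeq ij by (cases "i = 1"; cases "i = 2") auto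
          have ab: "\<And>c::'a mat. c \<in> UT_carrier (enat m) \<Longrightarrow>
              ut_one (enat m) i m = c i m + (\<Sum>k\<in>{i..<m}. c i k * Inv (enat m) c k m)"
          proof -
            fix c :: "'a mat" assume c: "c \<in> UT_carrier (enat m)"
            have midx: "m \<in> idx (enat m)" using ij by (simp add: idx_fin)
            have "ut_one (enat m) i m = ut_mult (enat m) c (Inv (enat m) c) i m" by (simp add: r_inv[OF c])
            also have "\<dots> = (\<Sum>k\<in>{i..m}. c i k * Inv (enat m) c k m)" by (rule mult_eq[OF c Inv_closed[OF c]])
            also have "{i..m} = insert m {i..<m}" using ij jeq by auto
            also have "(\<Sum>k\<in>insert m {i..<m}. c i k * Inv (enat m) c k m) = c i m * Inv (enat m) c m m + (\<Sum>k\<in>{i..<m}. c i k * Inv (enat m) c k m)"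
              by simp
            finally show "ut_one (enat m) i m = c i m + (\<Sum>k\<in>{i..<m}. c i k * Inv (enat m) c k m)"
              using carr_diag[OF Inv_closed[OF c] midx] by simp
          qed
          have "(\<Sum>k\<in>{i..<m}. b i k * Inv (enat m) b k m) = (\<Sum>k\<in>{i..<m}. a i k * Inv (enat m) a k m)"
            by (rule sum.cong[OF refl]) (use F2 F3 i3 ij in auto)
          hence "b i m = a i m" using ab[OF a] ab[OF b] by simp
          thus ?thesis using jeq by (simp add: b_def)
        qed
      qed
    qed
  qed
qed

lemma fin_sub:
  assumes P0: "pcai (enat m) chi"
  shows "subcentral (enat m) chi"
  unfolding subcentral_def
proof (intro exI ballI conjI)
  interpret P: pcai "enat m" chi by (rule P0)
  fix a :: "'a mat" assume a: "a \<in> UT_carrier (enat m)"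
  define z where "z = ut_mult (enat m) (Inv (enat m) a) (chi a)"
  have z: "z \<in> UT_carrier (enat m)" unfolding z_def by (simp add: mult_closed Inv_closed a P.cl)
  show "ut_mult (enat m) (Inv (enat m) a) (chi a) \<in> ut_center2 (enat m)"
    unfolding z_def[symmetric]
  proof (rule C2_lemma[OF z])
    fix i j :: nat assume E: "(i, j) \<notin> {(1, m - 1), (1, m), (2, m)}"
    show "z i j = ut_one (enat m) i j"
    proof (cases "i = 0")
      case True thus ?thesis using carr_out[OF z] by (simp add: ut_one_def idx_fin)
    next
      case False
      have "z i j = (\<Sum>k\<in>{i..j}. Inv (enat m) a i k * chi a k j)"
        unfolding z_def by (rule mult_eq[OF Inv_closed[OF a] P.cl[OF a]])
      also have "\<dots> = (\<Sum>k\<in>{i..j}. Inv (enat m) a i k * a k j)"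
      proof (rule sum.cong[OF refl])
        fix k assume k: "k \<in> {i..j}"
        have "(k, j) \<notin> {(1, m - 1), (1, m), (2, m)}"
          using E k False by (cases "k = 1"; cases "k = 2") auto
        thus "Inv (enat m) a i k * chi a k j = Inv (enat m) a i k * a k j"
          using fin_main[OF P0 a] by simp
      qed
      also have "\<dots> = ut_mult (enat m) (Inv (enat m) a) a i j"
        by (rule mult_eq[OF Inv_closed[OF a] a, symmetric])
      finally show ?thesis by (simp add: l_inv[OF a])
    qed
  qed
  show "chi a = ut_mult (enat m) a (ut_mult (enat m) (Inv (enat m) a) (chi a))"
    by (simp add: mult_assoc[OF a Inv_closed[OF a] P.cl[OF a], symmetric] r_inv[OF a] one_left[OF P.cl[OF a]])
qed

lemma inf_main:
  assumes P0: "pcai \<infinity> chi" and a: "a \<in> UT_carrier \<infinity>"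
  shows "chi a = a"
proof -
  interpret P: pcai "\<infinity>" chi by (rule P0)
  show ?thesis by (intro ext, rule P.A_lemma[OF a]) (simp add: idx_def)
qed

lemma inf_sub:
  assumes P0: "pcai \<infinity> chi"
  shows "subcentral \<infinity> chi"
  unfolding subcentral_def
  by (rule exI[of _ "\<lambda>_. ut_one \<infinity>"]) (simp add: one_center2 inf_main[OF P0] one_right)

theorem mainTheorem5:
  fixes n :: enat and \<phi> :: "('a::field) mat \<Rightarrow> 'a mat"
  assumes "PC_map n \<phi>" and "almost_identity n \<phi>"
  shows "subcentral n \<phi>
    \<and> (n = \<infinity> \<longrightarrow> (\<forall>a\<in>UT_carrier n. \<phi> a = a))
    \<and> (\<forall>m. n = enat m \<longrightarrow> (\<forall>a\<in>UT_carrier n. \<forall>i j.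
          (i, j) \<notin> {(1, m - 1), (1, m), (2, m)} \<longrightarrow> \<phi> a i j = a i j))"
proof -
  have P0: "pcai n \<phi>"
  proof
    fix x :: "'a mat" assume "x \<in> UT_carrier n"
    thus "\<phi> x \<in> UT_carrier n" using assms(1) unfolding PC_map_def bij_betw_def by blast
  next
    fix x y :: "'a mat" assume "x \<in> UT_carrier n" "y \<in> UT_carrier n"
    thus "\<phi> (ut_comm n x y) = ut_comm n (\<phi> x) (\<phi> y)" using assms(1) unfolding PC_map_def by blast
  next
    fix i j :: nat and \<alpha> :: 'a assume "i \<in> idx n" "j \<in> idx n" "i < j"
    thus "\<phi> (transv n i j \<alpha>) = transv n i j \<alpha>" using assms(2) unfolding almost_identity_def by blast
  qed
  show ?thesis
  proof (cases n)
    case (enat m)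
    have P1: "pcai (enat m) \<phi>" using P0 enat by simp
    show ?thesis using fin_sub[OF P1] fin_main[OF P1] enat by auto
  next
    case infinity
    have P1: "pcai \<infinity> \<phi>" using P0 infinity by simp
    show ?thesis using inf_sub[OF P1] inf_main[OF P1] infinity by auto
  qed
qed

end
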